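(* Let $X$ have the $\Gamma(\alpha,\theta)$ distribution with shape $\alpha>0$ and scale $\theta>0$ (density $x^{\alpha-1}e^{-x/\theta}/(\Gamma(\alpha)\theta^\alpha)$, $x\geq0$), and let $Y$ have the $\Gamma(\alpha,1)$ distribution. Then for each fixed $x\geq 0$, $$\lim_{s\to+\infty}\overline{T}_{X,s}(x)=\lim_{s\to+\infty}\overline{T}_{Y,s}\left(\frac{x}{\theta}\right)=e^{-x/\theta}.$$
   Context: For a nonnegative absolutely continuous random variable $Z$ with density $f_Z$, set $\overline{T}_{Z,0}=f_Z$, $\mu_{Z,0}=1$, and for integers $s\geq 1$ define recursively $\overline{T}_{Z,s}(x)=\frac{1}{\mu_{Z,s-1}}\int_x^\infty\overline{T}_{Z,s-1}(t)\,dt$ and $\mu_{Z,s}=\int_0^\infty\overline{T}_{Z,s}(t)\,dt$. $\overline{T}_{Z,s}$ is the tail (survival function) of the $s$-iterated distribution induced by $Z$. Limits are over integers $s$. *)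

theory Defs
  imports "HOL-Analysis.Analysis"
begin

definition gamma_density :: "real \<Rightarrow> real \<Rightarrow> real \<Rightarrow> real" where
  "gamma_density a th x =
     (if 0 \<le> x then x powr (a - 1) * exp (- x / th) / (Gamma a * th powr a) else 0)"

text \<open>Simultaneous recursion: iter_pair f s = (T_{Z,s}, mu_{Z,s}) for the density f of Z.\<close>
primrec iter_pair :: "(real \<Rightarrow> real) \<Rightarrow> nat \<Rightarrow> (real \<Rightarrow> real) \<times> real" where
  "iter_pair f 0 = (f, 1)"
| "iter_pair f (Suc s) =
     (let T = fst (iter_pair f s); m = snd (iter_pair f s);
          T' = (\<lambda>x. (1 / m) * (LBINT t:{x..}. T t))
      in (T', LBINT t:{0..}. T' t))"

definition iter_tail :: "(real \<Rightarrow> real) \<Rightarrow> nat \<Rightarrow> real \<Rightarrow> real" where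
  "iter_tail f s = fst (iter_pair f s)"

definition iter_mean :: "(real \<Rightarrow> real) \<Rightarrow> nat \<Rightarrow> real" where
  "iter_mean f s = snd (iter_pair f s)"

end

theory Submission
  imports Defs "HOL-Real_Asymp.Real_Asymp"
begin


lemma gd_meas[measurable]: "gamma_density a th \<in> borel_measurable borel"
  unfolding gamma_density_def by measurable

lemma kern_meas[measurable]:
  "(\<lambda>(x,t). ennreal (if x \<le> t then (t - x) ^ n * gamma_density a th t else 0))
     \<in> borel_measurable (lborel \<Otimes>\<^sub>M lborel)"
  by measurable

definition NN :: "real \<Rightarrow> real \<Rightarrow> nat \<Rightarrow> real \<Rightarrow> ennreal" where
  "NN a th n x = (\<integral>\<^sup>+t. ennreal (if x \<le> t then (t - x) ^ n * gamma_density a th t else 0) \<partial>lborel)"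

lemma NN_meas[measurable]: "NN a th n \<in> borel_measurable borel"
  unfolding NN_def by measurable



lemma gd_nonneg: "a > 0 \<Longrightarrow> th > 0 \<Longrightarrow> gamma_density a th t \<ge> 0"
  unfolding gamma_density_def by (auto intro!: divide_nonneg_pos mult_pos_pos Gamma_real_pos)

lemma inner_FTC:
  fixes c x t :: real
  assumes "c \<ge> 0" "x \<le> t"
  shows "(\<integral>\<^sup>+y. ennreal (if x \<le> y \<and> y \<le> t then (t - y) ^ n * c else 0) \<partial>lborel)
       = ennreal (c * (t - x) ^ Suc n / real (Suc n))"
proof -
  have "(\<integral>\<^sup>+y. ennreal (if x \<le> y \<and> y \<le> t then (t - y) ^ n * c else 0) \<partial>lborel)
      = (\<integral>\<^sup>+y. ennreal ((t - y) ^ n * c) * indicator {x..t} y \<partial>lborel)"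
    by (intro nn_integral_cong) (auto simp: indicator_def)
  also have "\<dots> = ennreal ((- c / real (Suc n) * (t - t) ^ Suc n) - (- c / real (Suc n) * (t - x) ^ Suc n))"
  proof (rule nn_integral_FTC_Icc[where F = "\<lambda>y. - c / real (Suc n) * (t - y) ^ Suc n"])
    show "(\<lambda>y. (t - y) ^ n * c) \<in> borel_measurable borel" by measurable
    fix y assume y: "y \<in> {x..t}"
    show "0 \<le> (t - y) ^ n * c" using y assms by auto
    have d: "((\<lambda>y. (t - y) ^ Suc n) has_real_derivative (real (Suc n) * (t - y) ^ n * (-1))) (at y)"
      by (rule derivative_eq_intros refl)+ simp
    have "((\<lambda>y. - c / real (Suc n) * (t - y) ^ Suc n) has_real_derivative
           (- c / real (Suc n)) * (real (Suc n) * (t - y) ^ n * (-1))) (at y)"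
      by (rule DERIV_cmult[OF d])
    moreover have "(- c / real (Suc n)) * (real (Suc n) * (t - y) ^ n * (-1)) = (t - y) ^ n * c"
      by (simp del: of_nat_Suc)
    ultimately show "((\<lambda>y. - c / real (Suc n) * (t - y) ^ Suc n) has_real_derivative (t - y) ^ n * c) (at y)"
      by (metis (no_types))
  qed (use assms in auto)
  also have "\<dots> = ennreal (c * (t - x) ^ Suc n / real (Suc n))"
    by (simp add: field_simps del: of_nat_Suc)
  finally show ?thesis .
qed

lemma NN_tonelli:
  assumes a: "a > 0" and th: "th > 0"
  shows "(\<integral>\<^sup>+y. (if x \<le> y then NN a th n y else 0) \<partial>lborel)
       = ennreal (1 / real (Suc n)) * NN a th (Suc n) x"
proof -
  let ?f = "gamma_density a th"
  have "(\<integral>\<^sup>+y. (if x \<le> y then NN a th n y else 0) \<partial>lborel)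
     = (\<integral>\<^sup>+y. (\<integral>\<^sup>+t. ennreal (if x \<le> y \<and> y \<le> t then (t - y) ^ n * ?f t else 0) \<partial>lborel) \<partial>lborel)"
    by (intro nn_integral_cong) (auto simp: NN_def)
  also have "\<dots> = (\<integral>\<^sup>+t. (\<integral>\<^sup>+y. ennreal (if x \<le> y \<and> y \<le> t then (t - y) ^ n * ?f t else 0) \<partial>lborel) \<partial>lborel)"
    by (rule lborel_pair.Fubini'[where f = "\<lambda>t y. ennreal (if x \<le> y \<and> y \<le> t then (t - y) ^ n * ?f t else 0)"]) measurable
  also have "\<dots> = (\<integral>\<^sup>+t. ennreal (1 / real (Suc n)) * ennreal (if x \<le> t then (t - x) ^ Suc n * ?f t else 0) \<partial>lborel)"
  proof (intro nn_integral_cong)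
    fix t :: real
    show "(\<integral>\<^sup>+y. ennreal (if x \<le> y \<and> y \<le> t then (t - y) ^ n * ?f t else 0) \<partial>lborel)
        = ennreal (1 / real (Suc n)) * ennreal (if x \<le> t then (t - x) ^ Suc n * ?f t else 0)"
    proof (cases "x \<le> t")
      case True
      show ?thesis using inner_FTC[OF gd_nonneg[OF a th, of t] True, of n] True gd_nonneg[OF a th, of t]
        by (simp add: ennreal_mult[symmetric] mult_ac)
    next
      case False
      then have "\<And>y. \<not> (x \<le> y \<and> y \<le> t)" by auto
      then have "(\<lambda>y. ennreal (if x \<le> y \<and> y \<le> t then (t - y) ^ n * ?f t else 0)) = (\<lambda>y. 0)"
        by (intro ext) (use False in auto)
      then show ?thesis using False by simp
    qed
  qed
  also have "\<dots> = ennreal (1 / real (Suc n)) * NN a th (Suc n) x"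
    unfolding NN_def by (rule nn_integral_cmult) measurable
  finally show ?thesis .
qed



lemma moment:
  fixes c th :: real
  assumes c: "c > 0" and th: "th > 0"
  shows "(\<integral>\<^sup>+u. ennreal (if 0 < u then u powr (c - 1) * exp (- u / th) else 0) \<partial>lborel)
       = ennreal (Gamma c * th powr c)"
proof -
  let ?g = "\<lambda>u. ennreal (if 0 < u then u powr (c - 1) * exp (- u / th) else 0)"
  have "(\<integral>\<^sup>+u. ?g u \<partial>lborel) = ennreal \<bar>th\<bar> * (\<integral>\<^sup>+v. ?g (0 + th * v) \<partial>lborel)"
    by (rule nn_integral_real_affine) (use th in auto)
  also have "(\<lambda>v. ?g (0 + th * v)) = (\<lambda>v. ennreal (th powr (c - 1)) * ennreal (indicator {0..} v * v powr (c - 1) / exp v))"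
  proof
    fix v :: real
    show "?g (0 + th * v) = ennreal (th powr (c - 1)) * ennreal (indicator {0..} v * v powr (c - 1) / exp v)"
    proof (cases "0 < v")
      case True
      then show ?thesis using th
        by (simp add: ennreal_mult[symmetric] powr_mult zero_less_mult_iff exp_minus field_simps)
    next
      case False
      then show ?thesis using th by (cases "v = 0") (auto simp: zero_less_mult_iff indicator_def)
    qed
  qed
  also have "(\<integral>\<^sup>+v. ennreal (th powr (c - 1)) * ennreal (indicator {0..} v * v powr (c - 1) / exp v) \<partial>lborel)
      = ennreal (th powr (c - 1)) * ennreal (Gamma c)"
    by (subst nn_integral_cmult) (auto simp: Gamma_conv_nn_integral_real[OF c])
  finally show ?thesis using th c
    by (simp add: ennreal_mult[symmetric] powr_diff Gamma_real_pos field_simps)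
qed



definition JJ :: "real \<Rightarrow> real \<Rightarrow> nat \<Rightarrow> real \<Rightarrow> ennreal" where
  "JJ a th n x = (\<integral>\<^sup>+u. ennreal (if 0 < u then u ^ n * (x + u) powr (a - 1) * exp (- u / th) else 0) \<partial>lborel)"

lemma NN_JJ:
  assumes a: "a > 0" and th: "th > 0" and x: "x \<ge> 0"
  shows "NN a th n x = ennreal (exp (- x / th) / (Gamma a * th powr a)) * JJ a th n x"
proof -
  let ?h = "\<lambda>t. ennreal (if x \<le> t then (t - x) ^ n * gamma_density a th t else 0)"
  let ?K = "exp (- x / th) / (Gamma a * th powr a)"
  have ae: "AE u in lborel. ?h (x + 1 * u) = ennreal ?K * ennreal (if 0 < u then u ^ n * (x + u) powr (a - 1) * exp (- u / th) else 0)"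
    using AE_lborel_singleton[of 0]
  proof eventually_elim
    case (elim u)
    show ?case
    proof (cases "0 < u")
      case True
      have e: "exp ((- x - u) / th) = exp (- (x / th)) * exp (- (u / th))"
        by (simp add: exp_add[symmetric] diff_divide_distrib add_divide_distrib)
      show ?thesis using True x a th
        by (simp add: gamma_density_def ennreal_mult[symmetric] e Gamma_real_pos)
    next
      case False
      then show ?thesis using elim by auto
    qed
  qed
  have "NN a th n x = ennreal \<bar>1\<bar> * (\<integral>\<^sup>+u. ?h (x + 1 * u) \<partial>lborel)"
    unfolding NN_def by (rule nn_integral_real_affine) auto
  also have "ennreal \<bar>1\<bar> * (\<integral>\<^sup>+u. ?h (x + 1 * u) \<partial>lborel) = (\<integral>\<^sup>+u. ennreal ?K * ennreal (if 0 < u then u ^ n * (x + u) powr (a - 1) * exp (- u / th) else 0) \<partial>lborel)"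
    using nn_integral_cong_AE[OF ae] by simp
  also have "\<dots> = ennreal ?K * JJ a th n x"
    unfolding JJ_def by (rule nn_integral_cmult) measurable
  finally show ?thesis .
qed

lemma JJ0:
  assumes a: "a > 0" and th: "th > 0"
  shows "JJ a th n 0 = ennreal (Gamma (real n + a) * th powr (real n + a))"
proof -
  have "JJ a th n 0 = (\<integral>\<^sup>+u. ennreal (if 0 < u then u powr ((real n + a) - 1) * exp (- u / th) else 0) \<partial>lborel)"
    unfolding JJ_def
    by (intro nn_integral_cong) (simp add: powr_realpow[symmetric] powr_add[symmetric] algebra_simps)
  also have "\<dots> = ennreal (Gamma (real n + a) * th powr (real n + a))"
    by (rule moment) (use a th in auto)
  finally show ?thesis .
qed

lemma bern_ineq:
  fixes b u x :: real
  assumes b: "b \<le> 0" and u: "u > 0" and x: "x \<ge> 0"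
  shows "u powr b \<le> (x + u) powr b + (- b) * x * u powr (b - 1)"
proof (cases "x = 0")
  case True then show ?thesis by simp
next
  case False
  then have "u < x + u" using x by auto
  from MVT2[OF this, of "\<lambda>s. s powr b" "\<lambda>s. b * s powr (b - 1)"] u
  obtain z where z: "u < z" "z < x + u" "(x + u) powr b - u powr b = (x + u - u) * (b * z powr (b - 1))"
    using has_real_derivative_powr by force
  have "z powr (b - 1) \<le> u powr (b - 1)" using z u b by (intro powr_mono2') auto
  then have "x * (- b) * z powr (b - 1) \<le> x * (- b) * u powr (b - 1)"
    using x b by (intro mult_left_mono) (auto simp: mult_nonneg_nonpos)
  then show ?thesis using z by (simp add: algebra_simps)
qed

lemma split_ineq:
  fixes b u x d :: real
  assumes b: "b \<ge> 0" and u: "u > 0" and x: "x \<ge> 0" and d: "d > 0"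
  shows "(x + u) powr b \<le> (1 + d) powr b * u powr b + (1 + 1 / d) powr b * x powr b"
proof (cases "x \<le> d * u")
  case True
  then have "(x + u) powr b \<le> ((1 + d) * u) powr b" using x u b by (intro powr_mono2) (auto simp: algebra_simps)
  also have "\<dots> = (1 + d) powr b * u powr b" using d u by (simp add: powr_mult)
  finally show ?thesis using x d by (smt (verit) mult_nonneg_nonneg powr_ge_zero)
next
  case False
  then have "u \<le> x / d" using d by (simp add: field_simps)
  then have "(x + u) powr b \<le> ((1 + 1 / d) * x) powr b" using x u b d by (intro powr_mono2) (auto simp: algebra_simps)
  also have "\<dots> = (1 + 1 / d) powr b * x powr b" using d x by (simp add: powr_mult)
  finally show ?thesis using u d by (smt (verit) mult_nonneg_nonneg powr_ge_zero)
qed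



lemma nn_int_lin:
  fixes B G :: "real \<Rightarrow> real"
  assumes [measurable]: "B \<in> borel_measurable borel" "G \<in> borel_measurable borel"
  assumes "\<And>u. B u \<ge> 0" "\<And>u. G u \<ge> 0" "c \<ge> 0"
  shows "(\<integral>\<^sup>+u. ennreal (B u + c * G u) \<partial>lborel)
       = (\<integral>\<^sup>+u. ennreal (B u) \<partial>lborel) + ennreal c * (\<integral>\<^sup>+u. ennreal (G u) \<partial>lborel)"
proof -
  have "(\<integral>\<^sup>+u. ennreal (B u + c * G u) \<partial>lborel) = (\<integral>\<^sup>+u. ennreal (B u) + ennreal c * ennreal (G u) \<partial>lborel)"
    using assms by (intro nn_integral_cong) (simp add: ennreal_plus ennreal_mult)
  also have "\<dots> = (\<integral>\<^sup>+u. ennreal (B u) \<partial>lborel) + (\<integral>\<^sup>+u. ennreal c * ennreal (G u) \<partial>lborel)"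
    by (rule nn_integral_add) auto
  also have "(\<integral>\<^sup>+u. ennreal c * ennreal (G u) \<partial>lborel) = ennreal c * (\<integral>\<^sup>+u. ennreal (G u) \<partial>lborel)"
    by (rule nn_integral_cmult) auto
  finally show ?thesis .
qed

lemma pow_powr: "u > 0 \<Longrightarrow> u ^ n * u powr r = u powr (real n + r)" for u r :: real
  by (simp add: powr_add powr_realpow)

lemma JJ_mono_le:
  assumes a: "a \<le> 1" and x: "x \<ge> 0"
  shows "JJ a th n x \<le> JJ a th n 0"
  unfolding JJ_def
proof (intro nn_integral_mono)
  fix u :: real
  show "ennreal (if 0 < u then u ^ n * (x + u) powr (a - 1) * exp (- u / th) else 0)
     \<le> ennreal (if 0 < u then u ^ n * (0 + u) powr (a - 1) * exp (- u / th) else 0)"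
    using a x by (auto intro!: ennreal_leI mult_right_mono mult_left_mono powr_mono2')
qed

lemma JJ_mono_ge:
  assumes a: "a \<ge> 1" and x: "x \<ge> 0"
  shows "JJ a th n 0 \<le> JJ a th n x"
  unfolding JJ_def
proof (intro nn_integral_mono)
  fix u :: real
  show "ennreal (if 0 < u then u ^ n * (0 + u) powr (a - 1) * exp (- u / th) else 0)
     \<le> ennreal (if 0 < u then u ^ n * (x + u) powr (a - 1) * exp (- u / th) else 0)"
    using a x by (auto intro!: ennreal_leI mult_right_mono mult_left_mono powr_mono2)
qed

lemma JJ_lower:
  assumes a0: "a > 0" and a: "a \<le> 1" and th: "th > 0" and x: "x \<ge> 0" and n: "n \<ge> 1"
  shows "JJ a th n 0 \<le> JJ a th n x + ennreal ((1 - a) * x) * ennreal (Gamma (real n + a - 1) * th powr (real n + a - 1))"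
proof -
  let ?B = "\<lambda>u. if 0 < u then u ^ n * (x + u) powr (a - 1) * exp (- u / th) else 0"
  let ?G = "\<lambda>u. if 0 < u then u powr ((real n + a - 1) - 1) * exp (- u / th) else 0"
  have "JJ a th n 0 \<le> (\<integral>\<^sup>+u. ennreal (?B u + ((1 - a) * x) * ?G u) \<partial>lborel)"
    unfolding JJ_def
  proof (intro nn_integral_mono ennreal_leI)
    fix u :: real
    show "(if 0 < u then u ^ n * (0 + u) powr (a - 1) * exp (- u / th) else 0) \<le> ?B u + ((1 - a) * x) * ?G u"
    proof (cases "0 < u")
      case True
      define P where "P = u ^ n * exp (- u / th)"
      have P0: "P \<ge> 0" using True by (simp add: P_def)
      have "u powr (a - 1) \<le> (x + u) powr (a - 1) + (- (a - 1)) * x * u powr (a - 1 - 1)"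
        by (rule bern_ineq) (use a True x in auto)
      then have h1: "P * u powr (a - 1) \<le> P * (x + u) powr (a - 1) + P * ((- (a - 1)) * x * u powr (a - 1 - 1))"
        using P0 by (metis distrib_left mult_left_mono)
      have pp: "u ^ n * u powr (a - 1 - 1) = u powr (real n + a - 1 - 1)"
        using pow_powr[OF True, of n "a - 1 - 1"] by (simp add: algebra_simps)
      have h2: "P * ((- (a - 1)) * x * u powr (a - 1 - 1)) = ((1 - a) * x) * ((u ^ n * u powr (a - 1 - 1)) * exp (- u / th))"
        by (simp add: P_def algebra_simps)
      have h3: "u ^ n * (0 + u) powr (a - 1) * exp (- u / th) = P * u powr (a - 1)"
        by (simp add: P_def mult_ac)
      have h4: "u ^ n * (x + u) powr (a - 1) * exp (- u / th) = P * (x + u) powr (a - 1)"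
        by (simp add: P_def mult_ac)
      have h2': "P * ((- (a - 1)) * x * u powr (a - 1 - 1)) = ((1 - a) * x) * (u powr (real n + a - 1 - 1) * exp (- u / th))"
        unfolding h2 pp ..
      show ?thesis unfolding if_P[OF True] h3 h4 using h1 h2' by linarith
    qed auto
  qed
  also have "\<dots> = JJ a th n x + ennreal ((1 - a) * x) * (\<integral>\<^sup>+u. ennreal (?G u) \<partial>lborel)"
    unfolding JJ_def by (rule nn_int_lin) (use a x th in auto)
  also have "(\<integral>\<^sup>+u. ennreal (?G u) \<partial>lborel) = ennreal (Gamma (real n + a - 1) * th powr (real n + a - 1))"
    by (rule moment) (use n a0 th in auto)
  finally show ?thesis .
qed

lemma JJ_upper:
  assumes a: "a > 1" and th: "th > 0" and x: "x \<ge> 0" and d: "d > 0"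
  shows "JJ a th n x \<le> ennreal ((1 + d) powr (a - 1)) * ennreal (Gamma (real n + a) * th powr (real n + a))
          + ennreal ((1 + 1 / d) powr (a - 1) * x powr (a - 1)) * ennreal (Gamma (real n + 1) * th powr (real n + 1))"
proof -
  let ?G1 = "\<lambda>u. if 0 < u then u powr ((real n + a) - 1) * exp (- u / th) else 0"
  let ?G2 = "\<lambda>u. if 0 < u then u powr ((real n + 1) - 1) * exp (- u / th) else 0"
  let ?c1 = "(1 + d) powr (a - 1)" and ?c2 = "(1 + 1 / d) powr (a - 1) * x powr (a - 1)"
  have "JJ a th n x \<le> (\<integral>\<^sup>+u. ennreal (?c1 * ?G1 u + ?c2 * ?G2 u) \<partial>lborel)"
    unfolding JJ_def
  proof (intro nn_integral_mono ennreal_leI)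
    fix u :: real
    show "(if 0 < u then u ^ n * (x + u) powr (a - 1) * exp (- u / th) else 0) \<le> ?c1 * ?G1 u + ?c2 * ?G2 u"
    proof (cases "0 < u")
      case True
      define P where "P = u ^ n * exp (- u / th)"
      have P0: "P \<ge> 0" using True by (simp add: P_def)
      have "(x + u) powr (a - 1) \<le> ?c1 * u powr (a - 1) + ?c2"
        using split_ineq[of "a - 1" u x d] a True x d by (simp add: mult.assoc)
      then have h1: "P * (x + u) powr (a - 1) \<le> ?c1 * (P * u powr (a - 1)) + ?c2 * P"
        using P0 by (metis (no_types, lifting) distrib_left mult.commute mult.left_commute mult_left_mono)
      have pp: "u ^ n * u powr (a - 1) = u powr (real n + a - 1)"
        using pow_powr[OF True, of n "a - 1"] by (simp add: algebra_simps)
      have pp2: "u ^ n = u powr (real n + 1 - 1)"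
        using powr_realpow[OF True, of n] by simp
      have h2: "P * u powr (a - 1) = (u ^ n * u powr (a - 1)) * exp (- u / th)"
        by (simp add: P_def algebra_simps)
      have h4: "u ^ n * (x + u) powr (a - 1) * exp (- u / th) = P * (x + u) powr (a - 1)"
        by (simp add: P_def mult_ac)
      have h5: "P = u powr (real n + 1 - 1) * exp (- u / th)"
        unfolding P_def by (subst pp2) (rule refl)
      have h2': "P * u powr (a - 1) = u powr (real n + a - 1) * exp (- u / th)"
        unfolding h2 pp ..
      have h6: "P * (x + u) powr (a - 1) \<le> ?c1 * (u powr (real n + a - 1) * exp (- u / th)) + ?c2 * P"
        using h1 unfolding h2' .
      show ?thesis unfolding if_P[OF True] h4 using h6 by (simp only: h5)
    qed auto
  qed
  also have "\<dots> = ennreal ?c1 * (\<integral>\<^sup>+u. ennreal (?G1 u) \<partial>lborel) + ennreal ?c2 * (\<integral>\<^sup>+u. ennreal (?G2 u) \<partial>lborel)"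
  proof -
    have "(\<integral>\<^sup>+u. ennreal (?c1 * ?G1 u + ?c2 * ?G2 u) \<partial>lborel)
        = (\<integral>\<^sup>+u. ennreal (?c1 * ?G1 u) \<partial>lborel) + ennreal ?c2 * (\<integral>\<^sup>+u. ennreal (?G2 u) \<partial>lborel)"
      by (rule nn_int_lin) (use th d x in auto)
    moreover have "(\<integral>\<^sup>+u. ennreal (?c1 * ?G1 u) \<partial>lborel) = ennreal ?c1 * (\<integral>\<^sup>+u. ennreal (?G1 u) \<partial>lborel)"
      by (subst nn_integral_cmult[symmetric]) (auto simp: ennreal_mult)
    ultimately show ?thesis by simp
  qed
  also have "(\<integral>\<^sup>+u. ennreal (?G1 u) \<partial>lborel) = ennreal (Gamma (real n + a) * th powr (real n + a))"
    by (rule moment) (use a th in auto)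
  also have "(\<integral>\<^sup>+u. ennreal (?G2 u) \<partial>lborel) = ennreal (Gamma (real n + 1) * th powr (real n + 1))"
    by (rule moment) (use th in auto)
  finally show ?thesis .
qed



lemma iter_tail_Suc: "iter_tail f (Suc s) = (\<lambda>x. (1 / iter_mean f s) * (LBINT t:{x..}. iter_tail f s t))"
  by (simp add: iter_tail_def iter_mean_def Let_def)

lemma iter_mean_Suc: "iter_mean f (Suc s) = (LBINT t:{0..}. iter_tail f (Suc s) t)"
  by (simp add: iter_tail_def iter_mean_def Let_def)

lemma iter_0: "iter_tail f 0 = f" "iter_mean f 0 = 1"
  by (simp_all add: iter_tail_def iter_mean_def)

lemma Kpos:
  fixes a th x :: real
  assumes a: "a > 0" and th: "th > 0"
  shows "exp (- x / th) / (Gamma a * th powr a) > 0"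
proof -
  have "Gamma a * th powr a > 0" using Gamma_real_pos[OF a] th by simp
  then show ?thesis by simp
qed

lemma frac_aux: "(d::real) \<noteq> 0 \<Longrightarrow> B \<noteq> 0 \<Longrightarrow> 1 / (B / d) * (A / d) = A / B"
  by (simp add: field_simps)

lemma NN0: 
  assumes a: "a > 0" and th: "th > 0"
  shows "NN a th n 0 = ennreal (Gamma (real n + a) * th powr (real n + a) / (Gamma a * th powr a))"
  using NN_JJ[OF a th, of 0 n] JJ0[OF a th, of n] Kpos[OF a th, of 0] a th
  by (simp add: ennreal_mult[symmetric] Gamma_real_pos)

lemma NN0_pos: 
  assumes a: "a > 0" and th: "th > 0"
  shows "enn2real (NN a th n 0) > 0"
  using NN0[OF a th, of n] a th by (simp add: Gamma_real_pos)

lemma NN_fin: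
  assumes a: "a > 0" and th: "th > 0" and x: "x \<ge> 0"
  shows "NN a th n x < \<infinity>"
proof -
  have "JJ a th n x < \<infinity>"
  proof (cases "a \<le> 1")
    case True
    then have "JJ a th n x \<le> JJ a th n 0" using JJ_mono_le x by blast
    also have "\<dots> < \<infinity>" using JJ0[OF a th] by simp
    finally show ?thesis .
  next
    case False
    then have "JJ a th n x \<le> ennreal ((1 + 1) powr (a - 1)) * ennreal (Gamma (real n + a) * th powr (real n + a))
          + ennreal ((1 + 1 / 1) powr (a - 1) * x powr (a - 1)) * ennreal (Gamma (real n + 1) * th powr (real n + 1))"
      using JJ_upper[of a th x 1 n] th x by simp
    also have "\<dots> < \<infinity>" by (simp add: ennreal_mult_less_top)
    finally show ?thesis .
  qed
  then show ?thesis using NN_JJ[OF a th x, of n] by (simp add: ennreal_mult_less_top)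
qed

lemma LBINT_base:
  assumes a: "a > 0" and th: "th > 0"
  shows "(LBINT t:{x..}. gamma_density a th t) = enn2real (NN a th 0 x)"
proof -
  have "(LBINT t:{x..}. gamma_density a th t) = integral\<^sup>L lborel (\<lambda>t. indicator {x..} t * gamma_density a th t)"
    by (simp add: set_lebesgue_integral_def)
  also have "\<dots> = enn2real (\<integral>\<^sup>+t. ennreal (indicator {x..} t * gamma_density a th t) \<partial>lborel)"
    by (rule integral_eq_nn_integral) (auto simp: gd_nonneg[OF a th])
  also have "(\<integral>\<^sup>+t. ennreal (indicator {x..} t * gamma_density a th t) \<partial>lborel) = NN a th 0 x"
    unfolding NN_def by (intro nn_integral_cong) (auto simp: indicator_def)
  finally show ?thesis .
qed

lemma LBINT_conv:
  assumes a: "a > 0" and th: "th > 0" and x: "x \<ge> 0" and c: "c > 0"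
    and T: "\<And>t. t \<ge> 0 \<Longrightarrow> T t = enn2real (NN a th n t) / c"
  shows "(LBINT t:{x..}. T t) = enn2real (NN a th (Suc n) x) / (real (Suc n) * c)"
proof -
  have "(LBINT t:{x..}. T t) = (LBINT t:{x..}. enn2real (NN a th n t) / c)"
    by (rule set_lebesgue_integral_cong) (use x T in auto)
  also have "\<dots> = integral\<^sup>L lborel (\<lambda>t. indicator {x..} t * (enn2real (NN a th n t) / c))"
    by (simp add: set_lebesgue_integral_def)
  also have "\<dots> = enn2real (\<integral>\<^sup>+t. ennreal (indicator {x..} t * (enn2real (NN a th n t) / c)) \<partial>lborel)"
    by (rule integral_eq_nn_integral) (use c in auto)
  also have "(\<integral>\<^sup>+t. ennreal (indicator {x..} t * (enn2real (NN a th n t) / c)) \<partial>lborel)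
      = (\<integral>\<^sup>+t. (if x \<le> t then NN a th n t else 0) * ennreal (1 / c) \<partial>lborel)"
  proof (intro nn_integral_cong)
    fix t :: real
    show "ennreal (indicator {x..} t * (enn2real (NN a th n t) / c)) = (if x \<le> t then NN a th n t else 0) * ennreal (1 / c)"
    proof (cases "x \<le> t")
      case True
      then have "NN a th n t < \<infinity>" using NN_fin[OF a th, of t] x by simp
      then have "ennreal (enn2real (NN a th n t)) = NN a th n t" by simp
      then show ?thesis using True c by (simp add: ennreal_mult divide_inverse)
    qed simp
  qed
  also have "\<dots> = (\<integral>\<^sup>+t. (if x \<le> t then NN a th n t else 0) \<partial>lborel) * ennreal (1 / c)"
    by (rule nn_integral_multc) measurable
  also have "\<dots> = ennreal (1 / real (Suc n)) * NN a th (Suc n) x * ennreal (1 / c)"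
    using NN_tonelli[OF a th] by simp
  also have "enn2real \<dots> = enn2real (NN a th (Suc n) x) / (real (Suc n) * c)"
    using c by (simp add: enn2real_mult divide_inverse mult_ac)
  finally show ?thesis .
qed

lemma iter_rep:
  assumes a: "a > 0" and th: "th > 0"
  shows "\<forall>x\<ge>0. iter_tail (gamma_density a th) (Suc n) x = enn2real (NN a th n x) / enn2real (NN a th n 0)"
proof (induction n)
  case 0
  have "enn2real (NN a th 0 0) = 1"
    using NN0[OF a th, of 0] a th Gamma_real_pos[OF a] by simp
  then show ?case by (simp add: iter_tail_Suc iter_0 LBINT_base[OF a th])
next
  case (Suc n)
  let ?c = "enn2real (NN a th n 0)"
  have c: "?c > 0" by (rule NN0_pos[OF a th])
  have I: "(LBINT t:{y..}. iter_tail (gamma_density a th) (Suc n) t) = enn2real (NN a th (Suc n) y) / (real (Suc n) * ?c)"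
    if "y \<ge> 0" for y
    by (rule LBINT_conv[OF a th that c]) (use Suc.IH in auto)
  have p: "enn2real (NN a th (Suc n) 0) > 0" by (rule NN0_pos[OF a th])
  show ?case
  proof (intro allI impI)
    fix x :: real assume x: "x \<ge> 0"
    have "iter_tail (gamma_density a th) (Suc (Suc n)) x
        = (1 / (enn2real (NN a th (Suc n) 0) / (real (Suc n) * ?c))) * (enn2real (NN a th (Suc n) x) / (real (Suc n) * ?c))"
      by (simp only: iter_tail_Suc[of _ "Suc n"] iter_mean_Suc I[OF x] I[OF order_refl])
    also have "\<dots> = enn2real (NN a th (Suc n) x) / enn2real (NN a th (Suc n) 0)"
      using c p by (intro frac_aux) auto
    finally show "iter_tail (gamma_density a th) (Suc (Suc n)) x = enn2real (NN a th (Suc n) x) / enn2real (NN a th (Suc n) 0)" .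
  qed
qed



lemma not_nonpos: "(a::real) > 0 \<Longrightarrow> a \<notin> \<int>\<^sub>\<le>\<^sub>0"
  by (auto elim!: nonpos_Ints_cases)

lemma gamma_ratio_asymp:
  fixes a :: real
  assumes a: "a > 1"
  shows "(\<lambda>n. (1 + sqrt (real n + 1)) powr (a - 1) * (Gamma (real n + 1) / Gamma (real n + a))) \<longlonglongrightarrow> 0"
proof -
  have gpos: "Gamma a > 0" using a by (intro Gamma_real_pos) auto
  have a0: "a \<notin> \<int>\<^sub>\<le>\<^sub>0" using a by (intro not_nonpos) auto
  have L1: "(\<lambda>n. (1 + sqrt (real n + 1)) powr (a - 1) * real n powr (1 - a)) \<longlonglongrightarrow> 0"
  proof (rule Lim_transform_eventually)
    have r: "(\<lambda>n. (1 + sqrt (real n + 1)) / real n) \<longlonglongrightarrow> 0" by real_asymp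
    show "(\<lambda>n. ((1 + sqrt (real n + 1)) / real n) powr (a - 1)) \<longlonglongrightarrow> 0"
      by (rule tendsto_zero_powrI[OF r tendsto_const]) (use a in auto)
    show "\<forall>\<^sub>F n in sequentially. ((1 + sqrt (real n + 1)) / real n) powr (a - 1)
        = (1 + sqrt (real n + 1)) powr (a - 1) * real n powr (1 - a)"
      using eventually_ge_at_top[of 1]
    proof eventually_elim
      case (elim n)
      have "real n powr (1 - a) = inverse (real n powr (a - 1))"
        using elim by (simp add: powr_minus[symmetric])
      then show ?case using elim by (subst powr_divide) (auto simp: divide_inverse)
    qed
  qed
  have L2: "(\<lambda>n. Gamma_series' a n / Gamma a) \<longlonglongrightarrow> Gamma a / Gamma a"
    by (intro tendsto_divide Gamma_series'_LIMSEQ tendsto_const) (use gpos in auto)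
  have L: "(\<lambda>n. ((1 + sqrt (real n + 1)) powr (a - 1) * real n powr (1 - a)) * (Gamma_series' a n / Gamma a)) \<longlonglongrightarrow> 0 * (Gamma a / Gamma a)"
    by (intro tendsto_mult L1 L2)
  then have L': "(\<lambda>n. ((1 + sqrt (real n + 1)) powr (a - 1) * real n powr (1 - a)) * (Gamma_series' a n / Gamma a)) \<longlonglongrightarrow> 0"
    by (simp only: mult_zero_left)
  show ?thesis
  proof (rule Lim_transform_eventually[OF L'])
    show "\<forall>\<^sub>F n in sequentially. (1 + sqrt (real n + 1)) powr (a - 1) * real n powr (1 - a) * (Gamma_series' a n / Gamma a)
        = (1 + sqrt (real n + 1)) powr (a - 1) * (Gamma (real n + 1) / Gamma (real n + a))"
      using eventually_ge_at_top[of 1]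
    proof eventually_elim
      case (elim n)
      then obtain m where m: "n = Suc m" by (cases n) auto
      have g1: "Gamma (real n + 1) = real n * fact m"
        using Gamma_fact[of n] m by (simp add: add.commute)
      have gs: "Gamma_series' a n = fact m * real n powr a * Gamma a / Gamma (a + real n)"
        unfolding Gamma_series'_def pochhammer_Gamma[OF a0] using m
        by (simp add: powr_def)
      have ga: "Gamma (a + real n) > 0" using a by (intro Gamma_real_pos) auto
      have gaa: "Gamma a > 0" using a by (intro Gamma_real_pos) auto
      have np: "real n > 0" using m by simp
      have "real n powr (1 - a) * real n powr a = real n"
        using np by (simp add: powr_add[symmetric])
      then show ?case
        unfolding g1 gs using ga gaa np by (simp add: field_simps add.commute)
    qed
  qed
qed



lemma JJ_fin:
  assumes a: "a > 0" and th: "th > 0" and x: "x \<ge> 0"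
  shows "JJ a th n x < \<infinity>"
proof (cases "a \<le> 1")
  case True
  then have "JJ a th n x \<le> JJ a th n 0" using JJ_mono_le x by blast
  also have "\<dots> < \<infinity>" using JJ0[OF a th] by simp
  finally show ?thesis .
next
  case False
  then have "JJ a th n x \<le> ennreal ((1 + 1) powr (a - 1)) * ennreal (Gamma (real n + a) * th powr (real n + a))
        + ennreal ((1 + 1 / 1) powr (a - 1) * x powr (a - 1)) * ennreal (Gamma (real n + 1) * th powr (real n + 1))"
    using JJ_upper[of a th x 1 n] th x by simp
  also have "\<dots> < \<infinity>" by (simp add: ennreal_mult_less_top)
  finally show ?thesis .
qed


lemma ratio_lim:
  fixes a th x :: real
  assumes a: "a > 0" and th: "th > 0" and x: "x \<ge> 0"
  shows "(\<lambda>n. enn2real (JJ a th n x) / (Gamma (real n + a) * th powr (real n + a))) \<longlonglongrightarrow> 1"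
proof -
  define G where "G n = Gamma (real n + a) * th powr (real n + a)" for n
  define Jr where "Jr n = enn2real (JJ a th n x)" for n
  have Gpos: "G n > 0" for n unfolding G_def using a th by (intro mult_pos_pos Gamma_real_pos) auto
  have JJr: "JJ a th n x = ennreal (Jr n)" for n
    unfolding Jr_def using JJ_fin[OF a th x, of n] by simp
  have Jr0: "Jr n \<ge> 0" for n unfolding Jr_def by simp
  have JJ0': "JJ a th n 0 = ennreal (G n)" for n unfolding G_def by (rule JJ0[OF a th])
  show ?thesis unfolding G_def[symmetric] Jr_def[symmetric]
  proof (cases "a \<le> 1")
    case True
    have up: "Jr n / G n \<le> 1" for n
    proof -
      have "ennreal (Jr n) \<le> ennreal (G n)" using JJ_mono_le[OF True x, of th n] by (simp add: JJr JJ0')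
      then have "Jr n \<le> G n" using Gpos[of n] by (simp add: ennreal_le_iff)
      then show ?thesis using Gpos[of n] by simp
    qed
    have low: "1 - (1 - a) * x / ((real n + a - 1) * th) \<le> Jr n / G n" if n: "n \<ge> 1" for n
    proof -
      define G' where "G' = Gamma (real n + a - 1) * th powr (real n + a - 1)"
      have p: "real n + a - 1 > 0" using n a by simp
      have G'pos: "G' > 0" unfolding G'_def using p th by (intro mult_pos_pos Gamma_real_pos) auto
      have c0: "(1 - a) * x \<ge> 0" using True x by simp
      have "ennreal (G n) \<le> ennreal (Jr n) + ennreal ((1 - a) * x) * ennreal G'"
        using JJ_lower[OF a True th x n] by (simp add: JJr JJ0' G'_def)
      also have "\<dots> = ennreal (Jr n + (1 - a) * x * G')"
        using c0 G'pos Jr0[of n] by (simp add: ennreal_mult ennreal_plus)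
      finally have le: "G n \<le> Jr n + (1 - a) * x * G'"
        using Jr0[of n] c0 G'pos by (subst (asm) ennreal_le_iff) (auto intro!: add_nonneg_nonneg)
      have GG: "G n = (real n + a - 1) * th * G'"
      proof -
        have "Gamma (real n + a) = Gamma ((real n + a - 1) + 1)" by simp
        also have "\<dots> = (real n + a - 1) * Gamma (real n + a - 1)"
          by (rule Gamma_plus1) (use p in \<open>auto intro!: not_nonpos\<close>)
        finally have "Gamma (real n + a) = (real n + a - 1) * Gamma (real n + a - 1)" .
        moreover have "th powr (real n + a) = th powr (real n + a - 1) * th"
          using th powr_add[of th "real n + a - 1" 1] by simp
        ultimately show ?thesis unfolding G_def G'_def by (simp add: mult_ac)
      qed
      have "(1 - a) * x / ((real n + a - 1) * th) = (1 - a) * x * G' / G n"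
        unfolding GG by (rule mult_divide_mult_cancel_right[symmetric]) (use G'pos in simp)
      moreover have "1 - (1 - a) * x * G' / G n \<le> Jr n / G n"
      proof -
        have "1 - (1 - a) * x * G' / G n = (G n - (1 - a) * x * G') / G n"
          using Gpos[of n] by (simp add: diff_divide_distrib)
        also have "\<dots> \<le> Jr n / G n" using le Gpos[of n] by (intro divide_right_mono) auto
        finally show ?thesis .
      qed
      ultimately show ?thesis by simp
    qed
    have lim: "(\<lambda>n. 1 - (1 - a) * x / ((real n + a - 1) * th)) \<longlonglongrightarrow> 1"
      using th by real_asymp
    have ev: "\<forall>\<^sub>F n in sequentially. 1 - (1 - a) * x / ((real n + a - 1) * th) \<le> Jr n / G n"
      using eventually_ge_at_top[of 1] by eventually_elim (rule low)
    show "(\<lambda>n. Jr n / G n) \<longlonglongrightarrow> 1"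
      by (rule tendsto_sandwich[OF ev _ lim tendsto_const]) (use up in auto)
  next
    case False
    then have a1: "a > 1" by simp
    have low: "1 \<le> Jr n / G n" for n
    proof -
      have "ennreal (G n) \<le> ennreal (Jr n)" using JJ_mono_ge[OF _ x, of a th n] a1 by (simp add: JJr JJ0')
      then have "G n \<le> Jr n" using Jr0[of n] by (simp add: ennreal_le_iff)
      then show ?thesis using Gpos[of n] by simp
    qed
    define h where "h n = (1 + 1 / sqrt (real n + 1)) powr (a - 1) + x powr (a - 1) * th powr (1 - a) *
        ((1 + sqrt (real n + 1)) powr (a - 1) * (Gamma (real n + 1) / Gamma (real n + a)))" for n
    have up: "Jr n / G n \<le> h n" for n
    proof -
      define d where "d = 1 / sqrt (real n + 1)"
      have d: "d > 0" unfolding d_def by simp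
      have dd: "1 / d = sqrt (real n + 1)" unfolding d_def by simp
      define c1 where "c1 = (1 + d) powr (a - 1)"
      define c2 where "c2 = (1 + 1 / d) powr (a - 1) * x powr (a - 1)"
      define H where "H = Gamma (real n + 1) * th powr (real n + 1)"
      have c1: "c1 \<ge> 0" and c2: "c2 \<ge> 0" and H: "H > 0" unfolding c1_def c2_def H_def using th
        by (auto intro!: mult_pos_pos Gamma_real_pos)
      have "ennreal (Jr n) \<le> ennreal c1 * ennreal (G n) + ennreal c2 * ennreal H"
        using JJ_upper[OF a1 th x d, of n] by (simp add: JJr c1_def c2_def G_def H_def)
      also have "\<dots> = ennreal (c1 * G n + c2 * H)"
        using c1 c2 H Gpos[of n] by (simp add: ennreal_mult ennreal_plus)
      finally have le: "Jr n \<le> c1 * G n + c2 * H"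
        using c1 c2 H Gpos[of n] by (subst (asm) ennreal_le_iff) (auto intro!: add_nonneg_nonneg)
      have HG: "H / G n = th powr (1 - a) * (Gamma (real n + 1) / Gamma (real n + a))"
      proof -
        have "th powr (real n + 1) = th powr (1 - a) * th powr (real n + a)"
          using th by (simp add: powr_add[symmetric] add.commute)
        then show ?thesis unfolding H_def G_def using th by (simp add: field_simps)
      qed
      have "Jr n / G n \<le> (c1 * G n + c2 * H) / G n"
        using le Gpos[of n] by (simp add: divide_right_mono)
      also have "\<dots> = c1 + c2 * (H / G n)" using Gpos[of n] by (simp add: field_simps)
      also have "\<dots> = h n" unfolding HG h_def c1_def c2_def dd d_def[symmetric] by (simp add: mult_ac)
      finally show ?thesis .
    qed
    have lim: "h \<longlonglongrightarrow> 1 powr (a - 1) + x powr (a - 1) * th powr (1 - a) * 0"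
      unfolding h_def
    proof (intro tendsto_add tendsto_mult tendsto_const gamma_ratio_asymp[OF a1] tendsto_powr)
      show "(\<lambda>n. 1 + 1 / sqrt (real n + 1)) \<longlonglongrightarrow> 1" by real_asymp
    qed simp
    show "(\<lambda>n. Jr n / G n) \<longlonglongrightarrow> 1"
      by (rule tendsto_sandwich[OF _ _ tendsto_const]) (use low up lim in auto)
  qed
qed



lemma main_lim:
  fixes a th x :: real
  assumes a: "a > 0" and th: "th > 0" and x: "x \<ge> 0"
  shows "(\<lambda>s. iter_tail (gamma_density a th) s x) \<longlonglongrightarrow> exp (- x / th)"
proof -
  define K where "K y = exp (- y / th) / (Gamma a * th powr a)" for y
  define G where "G n = Gamma (real n + a) * th powr (real n + a)" for n
  have Kpos': "K y > 0" for y unfolding K_def by (rule Kpos[OF a th])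
  have Gpos: "G n > 0" for n unfolding G_def using a th by (intro mult_pos_pos Gamma_real_pos) auto
  have eq: "iter_tail (gamma_density a th) (Suc n) x = exp (- x / th) * (enn2real (JJ a th n x) / G n)" for n
  proof -
    have "iter_tail (gamma_density a th) (Suc n) x = enn2real (NN a th n x) / enn2real (NN a th n 0)"
      using iter_rep[OF a th] x by blast
    also have "enn2real (NN a th n x) = K x * enn2real (JJ a th n x)"
      using NN_JJ[OF a th x, of n] Kpos'[of x] by (simp add: K_def enn2real_mult)
    also have "enn2real (NN a th n 0) = K 0 * G n"
      using NN_JJ[OF a th order_refl, of n] JJ0[OF a th, of n] Kpos'[of 0] Gpos[of n]
      by (simp add: K_def G_def enn2real_mult)
    also have "K x * enn2real (JJ a th n x) / (K 0 * G n) = (K x / K 0) * (enn2real (JJ a th n x) / G n)"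
      by simp
    also have "K x / K 0 = exp (- x / th)"
      unfolding K_def using Gamma_real_pos[OF a] th by simp
    finally show ?thesis .
  qed
  have "(\<lambda>n. exp (- x / th) * (enn2real (JJ a th n x) / G n)) \<longlonglongrightarrow> exp (- x / th) * 1"
    by (intro tendsto_mult tendsto_const) (use ratio_lim[OF a th x] in \<open>simp add: G_def\<close>)
  then have "(\<lambda>n. iter_tail (gamma_density a th) (Suc n) x) \<longlonglongrightarrow> exp (- x / th)"
    by (simp add: eq)
  then show ?thesis by (rule filterlim_sequentially_Suc[THEN iffD1])
qed

theorem corollary3:
  fixes a th x :: real
  assumes "a > 0" and "th > 0" and "x \<ge> 0"
  shows "(\<lambda>s. iter_tail (gamma_density a th) s x) \<longlonglongrightarrow> exp (- x / th)
       \<and> (\<lambda>s. iter_tail (gamma_density a 1) s (x / th)) \<longlonglongrightarrow> exp (- x / th)"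
  using main_lim[OF assms] main_lim[of a 1 "x / th"] assms by simp


end
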